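(* Let $M=B\circ S$ with $S$ Poisson subsampling of rate $r$ and $B$ the Gaussian mechanism $B(y)=h(y)+V$, $h:\mathbb Y\to\mathbb R^D$, $V\sim\mathcal N(0,\sigma^2 I_D)$, $\sigma>0$. Let $L_2=\max_{y\simeq_\pm y'}\|h(y)-h(y')\|_2>0$. Then for all $x\simeq_{K_+,K_-}x'$, $$\Psi_\alpha(m_x\|m_{x'})\le\Psi_\alpha\Big(\sum_{i=1}^{K_-+1}f^{(1)}_i\,\mathrm{Binom}(i-1\mid K_-,r)\ \Big\|\ \sum_{j=1}^{K_++1}f^{(2)}_j\,\mathrm{Binom}(j-1\mid K_+,r)\Big),$$ where $f^{(1)}_i$ is the univariate normal density with mean $i-1$ and standard deviation $\sigma/L_2$, and $f^{(2)}_j$ is the univariate normal density with mean $-(j-1)$ and standard deviation $\sigma/L_2$.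
   Context: Finite set $\mathbb A$, datasets $x\subseteq\mathbb A$, batches are subsets $y\subseteq x$. Poisson subsampling with rate $r$: $s_x(y)=r^{|y|}(1-r)^{|x|-|y|}$ for $y\subseteq x$; $m_x(z)=\sum_y b_y(z)s_x(y)$ where $b_y$ is the density of $B(y)$. $y\simeq_\pm y'$ iff one is obtained from the other by inserting or removing a single element. $x\simeq_{K_+,K_-}x'$ iff $x'=(x\setminus g_-)\cup g_+$ with $g_-\subseteq x$, $|g_-|=K_-$, $g_+\cap x=\emptyset$, $|g_+|=K_+$. $\mathrm{Binom}(k\mid n,r)=\binom nk r^k(1-r)^{n-k}$. $H_\alpha(p\|q)=\int\max\{p-\alpha q,0\}$ ($\alpha\ge0$), $\Lambda_\alpha(p\|q)=\int p^\alpha q^{1-\alpha}$ ($\alpha>1$); $\Psi_\alpha$ is either. *)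

theory Defs
  imports "HOL-Probability.Probability"
begin

definition poisson_sub :: "real \<Rightarrow> 'a set \<Rightarrow> 'a set \<Rightarrow> real" where
  "poisson_sub r x y = (if y \<subseteq> x then r ^ card y * (1 - r) ^ (card x - card y) else 0)"

definition gauss_mech_density :: "real \<Rightarrow> ('b set \<Rightarrow> real ^ 'd) \<Rightarrow> 'b set \<Rightarrow> real ^ 'd \<Rightarrow> real" where
  "gauss_mech_density \<sigma> h y z = (\<Prod>i\<in>UNIV. normal_density (h y $ i) \<sigma> (z $ i))"

definition subsampled_density ::
  "real \<Rightarrow> real \<Rightarrow> ('b set \<Rightarrow> real ^ 'd) \<Rightarrow> 'b set \<Rightarrow> real ^ 'd \<Rightarrow> real" where
  "subsampled_density r \<sigma> h x z = (\<Sum>y\<in>Pow x. gauss_mech_density \<sigma> h y z * poisson_sub r x y)"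

definition neighbor_pm :: "'a set \<Rightarrow> 'a set \<Rightarrow> bool" where
  "neighbor_pm y y' \<longleftrightarrow> (\<exists>a. a \<notin> y \<and> y' = insert a y) \<or> (\<exists>a. a \<notin> y' \<and> y = insert a y')"

definition group_neighbor :: "nat \<Rightarrow> nat \<Rightarrow> 'a set \<Rightarrow> 'a set \<Rightarrow> bool" where
  "group_neighbor Kp Km x x' \<longleftrightarrow>
     (\<exists>gm gp. gm \<subseteq> x \<and> card gm = Km \<and> gp \<inter> x = {} \<and> card gp = Kp \<and> x' = (x - gm) \<union> gp)"

definition l2_sens :: "('a::finite set \<Rightarrow> real ^ 'd) \<Rightarrow> real" where
  "l2_sens h = Max {norm (h y - h y') | y y'. neighbor_pm y y'}"

definition Binom :: "nat \<Rightarrow> nat \<Rightarrow> real \<Rightarrow> real" where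
  "Binom k n r = real (n choose k) * r ^ k * (1 - r) ^ (n - k)"

definition hockey_stick :: "'c measure \<Rightarrow> real \<Rightarrow> ('c \<Rightarrow> real) \<Rightarrow> ('c \<Rightarrow> real) \<Rightarrow> ennreal" where
  "hockey_stick M \<alpha> p q = (\<integral>\<^sup>+ z. ennreal (max (p z - \<alpha> * q z) 0) \<partial>M)"

definition renyi_moment :: "'c measure \<Rightarrow> real \<Rightarrow> ('c \<Rightarrow> real) \<Rightarrow> ('c \<Rightarrow> real) \<Rightarrow> ennreal" where
  "renyi_moment M \<alpha> p q = (\<integral>\<^sup>+ z. ennreal (p z powr \<alpha> * q z powr (1 - \<alpha>)) \<partial>M)"

end

theory Submission
  imports Defs
begin


definition Phibar :: "real \<Rightarrow> real" where
  "Phibar c = measure (density lborel std_normal_density) {c<..}"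

lemma prob_std: "prob_space (density lborel (normal_density m s))" if "s > 0"
  by (metis prob_space_normal_density that)

lemma measure_normal_Ioi:
  assumes "s > 0"
  shows "measure (density lborel (normal_density m s)) {t<..} = Phibar ((t - m) / s)"
proof -
  let ?M = "density lborel (normal_density m s)"
  interpret prob_space ?M using prob_std assms by blast
  have X: "distributed ?M lborel (\<lambda>x. x) (normal_density m s)"
    by (auto simp: distributed_def intro!: density_cong simp: distr_id2 cong: distr_cong)
  then have Y: "distributed ?M lborel (\<lambda>x. (x - m) / s) std_normal_density"
    using normal_standard_normal_convert[OF assms, of "\<lambda>x. x" m] by simp
  have "measure ?M {t<..} = measure ?M ((\<lambda>x. (x - m) / s) -` {(t-m)/s<..} \<inter> space ?M)"
    using assms by (intro arg_cong2[where f=measure]) (auto simp: divide_strict_right_mono divide_less_cancel)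
  also have "\<dots> = measure (distr ?M lborel (\<lambda>x. (x - m) / s)) {(t-m)/s<..}"
    by (subst measure_distr) auto
  also have "distr ?M lborel (\<lambda>x. (x - m) / s) = density lborel std_normal_density"
    using Y by (simp add: distributed_def)
  finally show ?thesis unfolding Phibar_def .
qed



definition Gd :: "real \<Rightarrow> real^'d \<Rightarrow> real^'d \<Rightarrow> real" where
  "Gd \<sigma> \<mu> z = (\<Prod>i\<in>UNIV. normal_density (\<mu>$i) \<sigma> (z$i))"

definition NM :: "real \<Rightarrow> real^'d \<Rightarrow> (real^'d) measure" where
  "NM \<sigma> \<mu> = density lborel (\<lambda>z. ennreal (Gd \<sigma> \<mu> z))"

lemma Basis_vec_image: "(Basis :: (real^'d::finite) set) = (\<lambda>i. axis i 1) ` UNIV"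
  by (auto simp: Basis_vec_def)

lemma inj_axis1: "inj (\<lambda>i::'d::finite. axis i (1::real))"
  by (auto simp: inj_def axis_eq_axis)

lemma Gd_Basis: "Gd \<sigma> \<mu> z = (\<Prod>b\<in>Basis. normal_density (\<mu>\<bullet>b) \<sigma> (z\<bullet>b))"
  unfolding Gd_def Basis_vec_image
  by (subst prod.reindex[OF inj_axis1]) (simp add: inner_axis)

lemma Gd_measurable[measurable]: "(\<lambda>z. Gd \<sigma> \<mu> z) \<in> borel_measurable borel"
  unfolding Gd_Basis by measurable

lemma Gd_nonneg: "0 \<le> Gd \<sigma> \<mu> z"
  unfolding Gd_def by (intro prod_nonneg) auto

lemma Gd_pos: "\<sigma> > 0 \<Longrightarrow> 0 < Gd \<sigma> \<mu> z"
  unfolding Gd_def by (intro prod_pos) (auto intro: normal_density_pos)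

lemma sum_Basis_inner:
  fixes f :: "'a::euclidean_space \<Rightarrow> real"
  assumes "b \<in> Basis"
  shows "(\<Sum>c\<in>Basis. f c *\<^sub>R c) \<bullet> b = f b"
  using assms by (simp add: inner_sum_left inner_Basis if_distrib cong: if_cong)

lemma PiM_density_prod:
  fixes I :: "'i set" and g :: "'i \<Rightarrow> real \<Rightarrow> real"
  assumes I: "finite I" and g[measurable]: "\<And>i. g i \<in> borel_measurable borel"
    and gnn: "\<And>i x. 0 \<le> g i x" and P: "\<And>i. prob_space (density lborel (g i))"
  shows "density (PiM I (\<lambda>_. lborel)) (\<lambda>f. ennreal (\<Prod>i\<in>I. g i (f i)))
         = PiM I (\<lambda>i. density lborel (g i))"
proof -
  interpret L: product_sigma_finite "\<lambda>_::'i. lborel::real measure"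
    by standard
  interpret D: product_sigma_finite "\<lambda>i. density lborel (g i)"
    unfolding product_sigma_finite_def using P prob_space_imp_sigma_finite by blast
  show ?thesis
  proof (rule D.PiM_eqI[OF I])
    show "sets (density (Pi\<^sub>M I (\<lambda>_. lborel)) (\<lambda>f. ennreal (\<Prod>i\<in>I. g i (f i)))) = sets (Pi\<^sub>M I (\<lambda>i. density lborel (g i)))"
      by (auto intro!: sets_PiM_cong)
    fix A assume A: "\<And>i. i \<in> I \<Longrightarrow> A i \<in> sets (density lborel (g i))"
    then have A': "\<And>i. i \<in> I \<Longrightarrow> A i \<in> sets borel" by auto
    have "emeasure (density (Pi\<^sub>M I (\<lambda>_. lborel)) (\<lambda>f. ennreal (\<Prod>i\<in>I. g i (f i)))) (Pi\<^sub>E I A)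
        = (\<integral>\<^sup>+ f. ennreal (\<Prod>i\<in>I. g i (f i)) * indicator (Pi\<^sub>E I A) f \<partial>PiM I (\<lambda>_. lborel))"
      using A' by (subst emeasure_density) (auto intro!: sets_PiM_I_finite I)
    also have "\<dots> = (\<integral>\<^sup>+ f. (\<Prod>i\<in>I. ennreal (g i (f i)) * indicator (A i) (f i)) \<partial>PiM I (\<lambda>_. lborel))"
    proof (intro nn_integral_cong)
      fix f :: "'i \<Rightarrow> real" assume "f \<in> space (PiM I (\<lambda>_. lborel))"
      then have fe: "f \<in> extensional I" by (auto simp: space_PiM PiE_def)
      have "indicator (Pi\<^sub>E I A) f = (\<Prod>i\<in>I. indicator (A i) (f i) :: ennreal)"
        using fe I by (auto simp: indicator_def PiE_iff prod_zero_iff)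
      then show "ennreal (\<Prod>i\<in>I. g i (f i)) * indicator (Pi\<^sub>E I A) f
           = (\<Prod>i\<in>I. ennreal (g i (f i)) * indicator (A i) (f i))"
        by (simp add: prod.distrib prod_ennreal gnn)
    qed
    also have "\<dots> = (\<Prod>i\<in>I. \<integral>\<^sup>+ x. ennreal (g i x) * indicator (A i) x \<partial>lborel)"
      using A' by (intro L.product_nn_integral_prod I) auto
    also have "\<dots> = (\<Prod>i\<in>I. emeasure (density lborel (g i)) (A i))"
      using A' by (intro prod.cong refl) (simp add: emeasure_density)
    finally show "emeasure (density (Pi\<^sub>M I (\<lambda>_. lborel)) (\<lambda>f. ennreal (\<Prod>i\<in>I. g i (f i)))) (Pi\<^sub>E I A) = (\<Prod>i\<in>I. emeasure (density lborel (g i)) (A i))" .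
  qed
qed

lemma NM_distr:
  fixes \<mu> :: "real^'d::finite" assumes "\<sigma> > 0"
  shows "NM \<sigma> \<mu> = distr (PiM Basis (\<lambda>b. density lborel (normal_density (\<mu>\<bullet>b) \<sigma>))) borel
                      (\<lambda>f. \<Sum>b\<in>Basis. f b *\<^sub>R b)"
proof -
  let ?F = "\<lambda>f::real^'d\<Rightarrow>real. \<Sum>b\<in>Basis. f b *\<^sub>R b"
  have F[measurable]: "?F \<in> measurable (PiM Basis (\<lambda>_. lborel)) borel"
    by measurable
  have "NM \<sigma> \<mu> = density (distr (PiM Basis (\<lambda>_. lborel)) borel ?F) (\<lambda>z. ennreal (Gd \<sigma> \<mu> z))"
    unfolding NM_def by (subst lborel_eq) simp
  also have "\<dots> = distr (density (PiM Basis (\<lambda>_. lborel)) (\<lambda>f. ennreal (Gd \<sigma> \<mu> (?F f)))) borel ?F"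
    by (rule density_distr) auto
  also have "density (PiM Basis (\<lambda>_. lborel)) (\<lambda>f. ennreal (Gd \<sigma> \<mu> (?F f)))
      = density (PiM Basis (\<lambda>_. lborel)) (\<lambda>f. ennreal (\<Prod>b\<in>Basis. normal_density (\<mu>\<bullet>b) \<sigma> (f b)))"
    by (intro density_cong) (auto simp: Gd_Basis sum_Basis_inner intro!: prod.cong)
  also have "\<dots> = PiM Basis (\<lambda>b. density lborel (normal_density (\<mu>\<bullet>b) \<sigma>))"
    by (rule PiM_density_prod) (auto intro: prob_std assms)
  finally show ?thesis .
qed



lemma NM_halfspace:
  fixes \<mu> e :: "real^'d::finite"
  assumes s: "\<sigma> > 0" and e: "norm e = 1"
  shows "measure (NM \<sigma> \<mu>) {z. z \<bullet> e > t} = Phibar ((t - \<mu> \<bullet> e) / \<sigma>)"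
proof -
  define M where "M = (\<lambda>b::real^'d. density lborel (normal_density (\<mu>\<bullet>b) \<sigma>))"
  define \<Omega> where "\<Omega> = PiM Basis M"
  let ?F = "\<lambda>f::real^'d\<Rightarrow>real. \<Sum>b\<in>Basis. f b *\<^sub>R b"
  have Mp: "\<And>b. prob_space (M b)" unfolding M_def using s by (intro prob_std)
  interpret prob_space \<Omega> unfolding \<Omega>_def by (intro prob_space_PiM Mp)
  have setsM[simp]: "\<And>b. sets (M b) = sets borel" unfolding M_def by simp
  have sp\<Omega>: "space \<Omega> = Basis \<rightarrow>\<^sub>E UNIV" unfolding \<Omega>_def by (simp add: space_PiM M_def)
  have comp: "distr \<Omega> borel (\<lambda>f. f b) = M b" if "b \<in> Basis" for b
  proof -
    have "distr \<Omega> borel (\<lambda>f. f b) = distr \<Omega> (M b) (\<lambda>f. f b)"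
      by (rule distr_cong) auto
    also have "\<dots> = M b" unfolding \<Omega>_def by (rule distr_PiM_component[OF Mp that])
    finally show ?thesis .
  qed
  have Xdist: "distributed \<Omega> lborel (\<lambda>f. f b) (normal_density (\<mu>\<bullet>b) \<sigma>)" if "b \<in> Basis" for b
  proof -
    have "distr \<Omega> lborel (\<lambda>f. f b) = distr \<Omega> borel (\<lambda>f. f b)"
      by (rule distr_cong) auto
    then show ?thesis
      unfolding distributed_def using comp[OF that]
      by (auto simp: M_def \<Omega>_def that)
  qed
  have indep: "indep_vars (\<lambda>_. borel) (\<lambda>b f. f b) Basis"
  proof (subst indep_vars_iff_distr_eq_PiM')
    show "Basis \<noteq> {}" by simp
    show "random_variable borel (\<lambda>f. f b)" if "b \<in> Basis" for b
    proof -
      have "(\<lambda>f. f b) \<in> measurable (PiM Basis M) (M b)" by (rule measurable_component_singleton[OF that])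
      then show ?thesis unfolding \<Omega>_def by (subst (asm) measurable_cong_sets[OF refl setsM[of b]])
    qed
    have "distr \<Omega> (Pi\<^sub>M Basis (\<lambda>_. borel)) (\<lambda>x. \<lambda>i\<in>Basis. x i) = distr \<Omega> \<Omega> (\<lambda>x. x)"
      by (rule distr_cong) (auto simp: \<Omega>_def space_PiM M_def PiE_restrict intro!: sets_PiM_cong)
    also have "\<dots> = \<Omega>" by simp
    also have "\<dots> = Pi\<^sub>M Basis (\<lambda>i. distr \<Omega> borel (\<lambda>f. f i))"
      unfolding \<Omega>_def by (intro PiM_cong refl) (auto simp: comp[unfolded \<Omega>_def])
    finally show "distr \<Omega> (Pi\<^sub>M Basis (\<lambda>_. borel)) (\<lambda>x. \<lambda>i\<in>Basis. x i) = Pi\<^sub>M Basis (\<lambda>i. distr \<Omega> borel (\<lambda>f. f i))" .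
  qed
  define B' where "B' = {b\<in>(Basis::(real^'d) set). e \<bullet> b \<noteq> 0}"
  have B'fin: "finite B'" unfolding B'_def by simp
  have sq: "(\<Sum>b\<in>Basis. (e \<bullet> b)^2) = 1"
    using e euclidean_inner[of e e] by (simp add: power2_eq_square flip: power2_norm_eq_inner)
  have sqB': "(\<Sum>b\<in>B'. (e \<bullet> b)^2) = 1"
  proof -
    have "(\<Sum>b\<in>Basis. (e \<bullet> b)^2) = (\<Sum>b\<in>B'. (e \<bullet> b)^2)"
      by (rule sum.mono_neutral_right) (auto simp: B'_def)
    then show ?thesis using sq by simp
  qed
  have B'ne: "B' \<noteq> {}" using sqB' by auto
  have muB': "(\<Sum>b\<in>B'. (e \<bullet> b) * (\<mu> \<bullet> b)) = \<mu> \<bullet> e"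
    using euclidean_inner[of \<mu> e] unfolding B'_def
    by (subst sum.mono_neutral_left[of Basis]) (auto simp: mult.commute)
  define Y where "Y = (\<lambda>f::real^'d\<Rightarrow>real. \<Sum>b\<in>B'. (e \<bullet> b) * f b)"
  have Ydist: "distributed \<Omega> lborel Y (normal_density (\<mu> \<bullet> e) \<sigma>)"
  proof -
    have ind': "indep_vars (\<lambda>_. borel) (\<lambda>b f. (e \<bullet> b) * f b) B'"
      using indep_vars_compose2[OF indep_vars_subset[OF indep, of B'], of "\<lambda>b x. (e \<bullet> b) * x" "\<lambda>_. borel"]
      by (auto simp: B'_def)
    have d': "distributed \<Omega> lborel (\<lambda>f. (e \<bullet> b) * f b) (normal_density ((e \<bullet> b) * (\<mu> \<bullet> b)) (\<bar>e \<bullet> b\<bar> * \<sigma>))"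
      if "b \<in> B'" for b
      using normal_density_affine[OF Xdist[of b] s, of "e \<bullet> b" 0] that by (auto simp: B'_def)
    have "distributed \<Omega> lborel (\<lambda>x. \<Sum>b\<in>B'. (e \<bullet> b) * x b)
       (normal_density (\<Sum>b\<in>B'. (e \<bullet> b) * (\<mu> \<bullet> b)) (sqrt (\<Sum>b\<in>B'. (\<bar>e \<bullet> b\<bar> * \<sigma>)\<^sup>2)))"
      by (rule sum_indep_normal[OF B'fin B'ne ind']) (use s d' in \<open>auto simp: B'_def\<close>)
    moreover have "(\<Sum>b\<in>B'. (\<bar>e \<bullet> b\<bar> * \<sigma>)\<^sup>2) = \<sigma>^2"
      using sqB' by (simp add: power_mult_distrib flip: sum_distrib_right)
    ultimately show ?thesis using s muB' by (simp add: Y_def)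
  qed
  have Fe: "?F f \<bullet> e = Y f" for f
  proof -
    have "?F f \<bullet> e = (\<Sum>b\<in>Basis. f b * (e \<bullet> b))"
      by (simp add: inner_sum_left inner_sum_right inner_commute[of _ e])
    also have "\<dots> = Y f" unfolding Y_def B'_def
      by (subst sum.mono_neutral_right[of Basis]) (auto simp: mult.commute)
    finally show ?thesis .
  qed
  have "measure (NM \<sigma> \<mu>) {z. z \<bullet> e > t} = measure (distr \<Omega> borel ?F) {z. z \<bullet> e > t}"
    using NM_distr[OF s, of \<mu>] by (simp add: \<Omega>_def M_def)
  also have "\<dots> = measure \<Omega> (?F -` {z. z \<bullet> e > t} \<inter> space \<Omega>)"
  proof -
    have se: "sets \<Omega> = sets (PiM Basis (\<lambda>_. borel::real measure))"
      unfolding \<Omega>_def by (intro sets_PiM_cong) auto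
    have Fm: "?F \<in> borel_measurable \<Omega>"
      by (subst measurable_cong_sets[OF se refl]) measurable
    show ?thesis by (rule measure_distr[OF Fm]) auto
  qed
  also have "?F -` {z. z \<bullet> e > t} \<inter> space \<Omega> = Y -` {t<..} \<inter> space \<Omega>"
    using Fe by auto
  also have "measure \<Omega> (Y -` {t<..} \<inter> space \<Omega>) = measure (distr \<Omega> lborel Y) {t<..}"
    using Ydist by (subst measure_distr) (auto simp: distributed_def)
  also have "\<dots> = measure (density lborel (normal_density (\<mu> \<bullet> e) \<sigma>)) {t<..}"
    using Ydist by (simp add: distributed_def)
  also have "\<dots> = Phibar ((t - \<mu> \<bullet> e) / \<sigma>)" by (rule measure_normal_Ioi[OF s])
  finally show ?thesis .
qed

lemma NM_prob:
  assumes s: "\<sigma> > 0" shows "prob_space (NM \<sigma> (\<mu>::real^'d::finite))"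
proof -
  have "prob_space (PiM Basis (\<lambda>b. density lborel (normal_density (\<mu>\<bullet>b) \<sigma>)))"
    by (intro prob_space_PiM prob_std s)
  then have "prob_space (distr (PiM Basis (\<lambda>b. density lborel (normal_density (\<mu>\<bullet>b) \<sigma>))) borel
                      (\<lambda>f. \<Sum>b\<in>Basis. f b *\<^sub>R b))"
    by (rule prob_space.prob_space_distr) measurable
  then show ?thesis by (subst NM_distr[OF s])
qed


lemma normal_density_ratio:
  "normal_density m \<sigma> x = normal_density m0 \<sigma> x * exp ((x * (m - m0)) / \<sigma>\<^sup>2 - (m\<^sup>2 - m0\<^sup>2) / (2 * \<sigma>\<^sup>2))"
proof -
  have "- ((x - m)\<^sup>2 / (2 * \<sigma>\<^sup>2)) = - ((x - m0)\<^sup>2 / (2 * \<sigma>\<^sup>2)) + ((x * (m - m0)) / \<sigma>\<^sup>2 - (m\<^sup>2 - m0\<^sup>2) / (2 * \<sigma>\<^sup>2))"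
  proof (cases "\<sigma> = 0")
    case False
    have n: "-(x-m)\<^sup>2 = -(x-m0)\<^sup>2 + (2*(x*(m-m0)) - (m\<^sup>2-m0\<^sup>2))"
      by (simp add: power2_eq_square algebra_simps)
    have "(x * (m - m0)) / \<sigma>\<^sup>2 = (2*(x*(m-m0))) / (2 * \<sigma>\<^sup>2)" using False by simp
    then have "(x * (m - m0)) / \<sigma>\<^sup>2 - (m\<^sup>2 - m0\<^sup>2) / (2 * \<sigma>\<^sup>2) = (2*(x*(m-m0)) - (m\<^sup>2-m0\<^sup>2)) / (2 * \<sigma>\<^sup>2)"
      by (simp add: diff_divide_distrib)
    moreover have "- ((x - m)\<^sup>2 / (2 * \<sigma>\<^sup>2)) = (-(x-m)\<^sup>2) / (2 * \<sigma>\<^sup>2)" by simp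
    ultimately show ?thesis unfolding n by (simp add: add_divide_distrib diff_divide_distrib)
  qed simp
  then show ?thesis unfolding normal_density_def
    by (simp add: mult_exp_exp mult.assoc)
qed

lemma Gd_ratio:
  fixes \<mu> \<mu>0 z :: "real^'d::finite"
  shows "Gd \<sigma> \<mu> z = Gd \<sigma> \<mu>0 z * exp ((z \<bullet> (\<mu> - \<mu>0)) / \<sigma>\<^sup>2 - (\<mu> \<bullet> \<mu> - \<mu>0 \<bullet> \<mu>0) / (2 * \<sigma>\<^sup>2))"
proof -
  have "Gd \<sigma> \<mu> z = (\<Prod>i\<in>UNIV. normal_density (\<mu>0$i) \<sigma> (z$i) *
      exp ((z$i * (\<mu>$i - \<mu>0$i)) / \<sigma>\<^sup>2 - ((\<mu>$i)\<^sup>2 - (\<mu>0$i)\<^sup>2) / (2 * \<sigma>\<^sup>2)))"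
    unfolding Gd_def by (intro prod.cong refl normal_density_ratio)
  also have "\<dots> = Gd \<sigma> \<mu>0 z * exp (\<Sum>i\<in>UNIV. (z$i * (\<mu>$i - \<mu>0$i)) / \<sigma>\<^sup>2 - ((\<mu>$i)\<^sup>2 - (\<mu>0$i)\<^sup>2) / (2 * \<sigma>\<^sup>2))"
    by (simp add: prod.distrib exp_sum Gd_def)
  also have "(\<Sum>i\<in>UNIV. (z$i * (\<mu>$i - \<mu>0$i)) / \<sigma>\<^sup>2 - ((\<mu>$i)\<^sup>2 - (\<mu>0$i)\<^sup>2) / (2 * \<sigma>\<^sup>2))
      = (z \<bullet> (\<mu> - \<mu>0)) / \<sigma>\<^sup>2 - (\<mu> \<bullet> \<mu> - \<mu>0 \<bullet> \<mu>0) / (2 * \<sigma>\<^sup>2)"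
    by (simp add: inner_vec_def sum_subtractf sum_divide_distrib power2_eq_square diff_divide_distrib)
  finally show ?thesis .
qed

lemma emeasure_density_ge:
  fixes g0 g1 :: "'a::euclidean_space \<Rightarrow> real"
  assumes [measurable]: "g0 \<in> borel_measurable borel" "g1 \<in> borel_measurable borel" "A \<in> sets borel"
    and k: "k \<ge> 0" and le: "\<And>z. z \<in> A \<Longrightarrow> k * g0 z \<le> g1 z" and nn: "\<And>z. 0 \<le> g0 z"
  shows "ennreal k * emeasure (density lborel g0) A \<le> emeasure (density lborel g1) A"
proof -
  have "ennreal k * emeasure (density lborel g0) A = (\<integral>\<^sup>+z. ennreal k * (ennreal (g0 z) * indicator A z) \<partial>lborel)"
    by (simp add: emeasure_density nn_integral_cmult)
  also have "\<dots> \<le> (\<integral>\<^sup>+z. ennreal (g1 z) * indicator A z \<partial>lborel)"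
    by (intro nn_integral_mono) (auto simp: indicator_def le k nn ennreal_mult[symmetric] ennreal_leI simp del: ennreal_mult)
  also have "\<dots> = emeasure (density lborel g1) A" by (simp add: emeasure_density)
  finally show ?thesis .
qed

lemma measure_density_ge:
  fixes g0 g1 :: "'a::euclidean_space \<Rightarrow> real"
  assumes [measurable]: "g0 \<in> borel_measurable borel" "g1 \<in> borel_measurable borel" "A \<in> sets borel"
    and k: "k \<ge> 0" and le: "\<And>z. z \<in> A \<Longrightarrow> k * g0 z \<le> g1 z" and nn: "\<And>z. 0 \<le> g0 z"
    and P0: "prob_space (density lborel g0)" and P1: "prob_space (density lborel g1)"
  shows "k * measure (density lborel g0) A \<le> measure (density lborel g1) A"
proof -
  have "ennreal k * ennreal (measure (density lborel g0) A) \<le> ennreal (measure (density lborel g1) A)"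
    using emeasure_density_ge[OF assms(1-6)]
    using P0 P1 by (simp add: finite_measure.emeasure_eq_measure prob_space_def)
  then show ?thesis using k by (simp add: ennreal_mult[symmetric])
qed

lemma emeasure_density_le:
  fixes g0 g1 :: "'a::euclidean_space \<Rightarrow> real"
  assumes [measurable]: "g0 \<in> borel_measurable borel" "g1 \<in> borel_measurable borel" "A \<in> sets borel"
    and k: "k \<ge> 0" and le: "\<And>z. z \<in> A \<Longrightarrow> g1 z \<le> k * g0 z" and nn: "\<And>z. 0 \<le> g0 z"
  shows "emeasure (density lborel g1) A \<le> ennreal k * emeasure (density lborel g0) A"
proof -
  have "emeasure (density lborel g1) A = (\<integral>\<^sup>+z. ennreal (g1 z) * indicator A z \<partial>lborel)"
    by (simp add: emeasure_density)
  also have "\<dots> \<le> (\<integral>\<^sup>+z. ennreal k * (ennreal (g0 z) * indicator A z) \<partial>lborel)"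
    by (intro nn_integral_mono) (auto simp: indicator_def le k nn ennreal_mult[symmetric] ennreal_leI simp del: ennreal_mult)
  also have "\<dots> = ennreal k * emeasure (density lborel g0) A"
    by (simp add: emeasure_density nn_integral_cmult)
  finally show ?thesis .
qed

lemma measure_density_le:
  fixes g0 g1 :: "'a::euclidean_space \<Rightarrow> real"
  assumes [measurable]: "g0 \<in> borel_measurable borel" "g1 \<in> borel_measurable borel" "A \<in> sets borel"
    and k: "k \<ge> 0" and le: "\<And>z. z \<in> A \<Longrightarrow> g1 z \<le> k * g0 z" and nn: "\<And>z. 0 \<le> g0 z"
    and P0: "prob_space (density lborel g0)" and P1: "prob_space (density lborel g1)"
  shows "measure (density lborel g1) A \<le> k * measure (density lborel g0) A"
proof -
  have "ennreal (measure (density lborel g1) A) \<le> ennreal k * ennreal (measure (density lborel g0) A)"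
    using emeasure_density_le[OF assms(1-6)]
    using P0 P1 by (simp add: finite_measure.emeasure_eq_measure prob_space_def)
  then show ?thesis using k by (simp add: ennreal_mult[symmetric])
qed

lemma NP_generic:
  fixes g0 g1 :: "'a::euclidean_space \<Rightarrow> real"
  assumes [measurable]: "g0 \<in> borel_measurable borel" "g1 \<in> borel_measurable borel" "S \<in> sets borel" "T \<in> sets borel"
    and k: "k \<ge> 0" and nn0: "\<And>z. 0 \<le> g0 z"
    and P0: "prob_space (density lborel g0)" and P1: "prob_space (density lborel g1)"
    and inT: "\<And>z. z \<in> T \<Longrightarrow> k * g0 z \<le> g1 z" and outT: "\<And>z. z \<notin> T \<Longrightarrow> g1 z \<le> k * g0 z"
    and m: "measure (density lborel g0) S \<le> measure (density lborel g0) T"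
  shows "measure (density lborel g1) S \<le> measure (density lborel g1) T"
proof -
  let ?M0 = "density lborel g0" and ?M1 = "density lborel g1"
  interpret M0: prob_space ?M0 by (rule P0)
  interpret M1: prob_space ?M1 by (rule P1)
  have a: "k * measure ?M0 (T - S) \<le> measure ?M1 (T - S)"
    by (rule measure_density_ge) (auto intro: inT nn0 P0 P1 k)
  have b: "measure ?M1 (S - T) \<le> k * measure ?M0 (S - T)"
    by (rule measure_density_le) (auto intro: outT nn0 P0 P1 k)
  have d1: "measure ?M1 (T - S) = measure ?M1 T - measure ?M1 (T \<inter> S)"
    "measure ?M1 (S - T) = measure ?M1 S - measure ?M1 (T \<inter> S)"
    by (auto simp: M1.finite_measure_Diff' Int_commute)
  have d0: "measure ?M0 (T - S) = measure ?M0 T - measure ?M0 (T \<inter> S)"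
    "measure ?M0 (S - T) = measure ?M0 S - measure ?M0 (T \<inter> S)"
    by (auto simp: M0.finite_measure_Diff' Int_commute)
  have "k * measure ?M0 (T - S) - k * measure ?M0 (S - T) = k * (measure ?M0 T - measure ?M0 S)"
    unfolding d0 by (simp add: algebra_simps)
  moreover have "k * (measure ?M0 T - measure ?M0 S) \<ge> 0" using k m by simp
  ultimately show ?thesis using a b d1 by linarith
qed

lemma NP_generic_rev:
  fixes g0 g1 :: "'a::euclidean_space \<Rightarrow> real"
  assumes [measurable]: "g0 \<in> borel_measurable borel" "g1 \<in> borel_measurable borel" "S \<in> sets borel" "T \<in> sets borel"
    and k: "k \<ge> 0" and nn0: "\<And>z. 0 \<le> g0 z"
    and P0: "prob_space (density lborel g0)" and P1: "prob_space (density lborel g1)"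
    and inT: "\<And>z. z \<in> T \<Longrightarrow> g1 z \<le> k * g0 z" and outT: "\<And>z. z \<notin> T \<Longrightarrow> k * g0 z \<le> g1 z"
    and m: "measure (density lborel g0) T \<le> measure (density lborel g0) S"
  shows "measure (density lborel g1) T \<le> measure (density lborel g1) S"
proof -
  let ?M0 = "density lborel g0" and ?M1 = "density lborel g1"
  interpret M0: prob_space ?M0 by (rule P0)
  interpret M1: prob_space ?M1 by (rule P1)
  have a: "k * measure ?M0 (S - T) \<le> measure ?M1 (S - T)"
    by (rule measure_density_ge) (auto intro: outT nn0 P0 P1 k)
  have b: "measure ?M1 (T - S) \<le> k * measure ?M0 (T - S)"
    by (rule measure_density_le) (auto intro: inT nn0 P0 P1 k)
  have d1: "measure ?M1 (T - S) = measure ?M1 T - measure ?M1 (T \<inter> S)"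
    "measure ?M1 (S - T) = measure ?M1 S - measure ?M1 (T \<inter> S)"
    by (auto simp: M1.finite_measure_Diff' Int_commute)
  have d0: "measure ?M0 (T - S) = measure ?M0 T - measure ?M0 (T \<inter> S)"
    "measure ?M0 (S - T) = measure ?M0 S - measure ?M0 (T \<inter> S)"
    by (auto simp: M0.finite_measure_Diff' Int_commute)
  have "k * measure ?M0 (S - T) - k * measure ?M0 (T - S) = k * (measure ?M0 S - measure ?M0 T)"
    unfolding d0 by (simp add: algebra_simps)
  moreover have "k * (measure ?M0 S - measure ?M0 T) \<ge> 0" using k m by simp
  ultimately show ?thesis using a b d1 by linarith
qed



lemma NM_density: "NM \<sigma> \<mu> = density lborel (Gd \<sigma> \<mu>)" by (simp add: NM_def)

lemma NP_up:
  fixes \<mu>0 \<mu> :: "real^'d::finite"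
  assumes s: "\<sigma> > 0" and S[measurable]: "S \<in> sets borel"
    and m: "measure (NM \<sigma> \<mu>0) S \<le> Phibar c"
  shows "measure (NM \<sigma> \<mu>) S \<le> Phibar (c - norm (\<mu> - \<mu>0) / \<sigma>)"
proof (cases "\<mu> = \<mu>0")
  case True then show ?thesis using m by simp
next
  case False
  define \<delta> where "\<delta> = norm (\<mu> - \<mu>0)"
  have dpos: "\<delta> > 0" using False by (simp add: \<delta>_def)
  define e where "e = (1/\<delta>) *\<^sub>R (\<mu> - \<mu>0)"
  have e: "norm e = 1" using dpos by (simp add: e_def \<delta>_def)
  have de: "(\<mu> - \<mu>0) \<bullet> e = \<delta>"
    using dpos by (simp add: e_def \<delta>_def power2_norm_eq_inner[symmetric] power2_eq_square)
  have ze: "z \<bullet> (\<mu> - \<mu>0) = \<delta> * (z \<bullet> e)" for z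
    using dpos by (simp add: e_def)
  define \<tau> where "\<tau> = \<mu>0 \<bullet> e + \<sigma> * c"
  define T where "T = {z::real^'d. z \<bullet> e > \<tau>}"
  have T[measurable]: "T \<in> sets borel" unfolding T_def by measurable
  define K where "K = (\<mu> \<bullet> \<mu> - \<mu>0 \<bullet> \<mu>0) / (2 * \<sigma>\<^sup>2)"
  define k where "k = exp (\<delta> * \<tau> / \<sigma>\<^sup>2 - K)"
  have g: "Gd \<sigma> \<mu> z = Gd \<sigma> \<mu>0 z * exp (\<delta> * (z \<bullet> e) / \<sigma>\<^sup>2 - K)" for z
    using Gd_ratio[of \<sigma> \<mu> z \<mu>0] by (simp add: ze K_def)
  have T0: "measure (NM \<sigma> \<mu>0) T = Phibar c"
    unfolding T_def using NM_halfspace[OF s e, of \<mu>0 \<tau>] s by (simp add: \<tau>_def)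
  have "\<mu> \<bullet> e = \<mu>0 \<bullet> e + \<delta>" using de by (simp add: inner_diff_left)
  then have T1: "measure (NM \<sigma> \<mu>) T = Phibar (c - norm (\<mu> - \<mu>0) / \<sigma>)"
    unfolding T_def using NM_halfspace[OF s e, of \<mu> \<tau>] s
    by (simp add: \<tau>_def \<delta>_def diff_divide_distrib)
  have "measure (density lborel (Gd \<sigma> \<mu>)) S \<le> measure (density lborel (Gd \<sigma> \<mu>)) T"
  proof (rule NP_generic[of "Gd \<sigma> \<mu>0" "Gd \<sigma> \<mu>" S T k])
    show "0 \<le> k" by (simp add: k_def)
    show "prob_space (density lborel (Gd \<sigma> \<mu>0))" "prob_space (density lborel (Gd \<sigma> \<mu>))"
      using NM_prob[OF s] by (simp_all add: NM_def)
    show "measure (density lborel (Gd \<sigma> \<mu>0)) S \<le> measure (density lborel (Gd \<sigma> \<mu>0)) T"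
      using m T0 by (simp add: NM_def)
    fix z
    have mono: "(\<delta> * \<tau> / \<sigma>\<^sup>2 - K \<le> \<delta> * (z \<bullet> e) / \<sigma>\<^sup>2 - K) \<longleftrightarrow> \<tau> \<le> z \<bullet> e"
      using dpos s by (simp add: divide_le_cancel)
    show "z \<in> T \<Longrightarrow> k * Gd \<sigma> \<mu>0 z \<le> Gd \<sigma> \<mu> z"
      unfolding g k_def T_def using mono Gd_nonneg[of \<sigma> \<mu>0 z]
      by (auto simp: mult.commute intro!: mult_left_mono)
    show "z \<notin> T \<Longrightarrow> Gd \<sigma> \<mu> z \<le> k * Gd \<sigma> \<mu>0 z"
      unfolding g k_def T_def using mono Gd_nonneg[of \<sigma> \<mu>0 z]
      by (auto simp: mult.commute intro!: mult_left_mono)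
  qed (auto simp: Gd_nonneg)
  then show ?thesis using T1 by (simp add: NM_def)
qed

lemma NP_low:
  fixes \<mu>0 \<nu> :: "real^'d::finite"
  assumes s: "\<sigma> > 0" and S[measurable]: "S \<in> sets borel"
    and m: "Phibar c \<le> measure (NM \<sigma> \<mu>0) S"
  shows "Phibar (c + norm (\<nu> - \<mu>0) / \<sigma>) \<le> measure (NM \<sigma> \<nu>) S"
proof (cases "\<nu> = \<mu>0")
  case True then show ?thesis using m by simp
next
  case False
  define \<delta> where "\<delta> = norm (\<nu> - \<mu>0)"
  have dpos: "\<delta> > 0" using False by (simp add: \<delta>_def)
  define e where "e = (1/\<delta>) *\<^sub>R (\<mu>0 - \<nu>)"
  have e: "norm e = 1" using dpos by (simp add: e_def \<delta>_def norm_minus_commute)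
  have de: "(\<mu>0 - \<nu>) \<bullet> e = \<delta>"
    using dpos by (simp add: e_def \<delta>_def power2_norm_eq_inner[symmetric] power2_eq_square norm_minus_commute)
  have ze: "z \<bullet> (\<nu> - \<mu>0) = - (\<delta> * (z \<bullet> e))" for z
    using dpos by (simp add: e_def inner_diff_right)
  define \<tau> where "\<tau> = \<mu>0 \<bullet> e + \<sigma> * c"
  define T where "T = {z::real^'d. z \<bullet> e > \<tau>}"
  have T[measurable]: "T \<in> sets borel" unfolding T_def by measurable
  define K where "K = (\<nu> \<bullet> \<nu> - \<mu>0 \<bullet> \<mu>0) / (2 * \<sigma>\<^sup>2)"
  define k where "k = exp (- (\<delta> * \<tau>) / \<sigma>\<^sup>2 - K)"
  have g: "Gd \<sigma> \<nu> z = Gd \<sigma> \<mu>0 z * exp (- (\<delta> * (z \<bullet> e)) / \<sigma>\<^sup>2 - K)" for z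
    using Gd_ratio[of \<sigma> \<nu> z \<mu>0] by (simp add: ze K_def)
  have T0: "measure (NM \<sigma> \<mu>0) T = Phibar c"
    unfolding T_def using NM_halfspace[OF s e, of \<mu>0 \<tau>] s by (simp add: \<tau>_def)
  have "\<nu> \<bullet> e = \<mu>0 \<bullet> e - \<delta>" using de by (simp add: inner_diff_left)
  then have T1: "measure (NM \<sigma> \<nu>) T = Phibar (c + norm (\<nu> - \<mu>0) / \<sigma>)"
    unfolding T_def using NM_halfspace[OF s e, of \<nu> \<tau>] s
    by (simp add: \<tau>_def \<delta>_def add_divide_distrib)
  have "measure (density lborel (Gd \<sigma> \<nu>)) T \<le> measure (density lborel (Gd \<sigma> \<nu>)) S"
  proof (rule NP_generic_rev[of "Gd \<sigma> \<mu>0" "Gd \<sigma> \<nu>" S T k])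
    show "0 \<le> k" by (simp add: k_def)
    show "prob_space (density lborel (Gd \<sigma> \<mu>0))" "prob_space (density lborel (Gd \<sigma> \<nu>))"
      using NM_prob[OF s] by (simp_all add: NM_def)
    show "measure (density lborel (Gd \<sigma> \<mu>0)) T \<le> measure (density lborel (Gd \<sigma> \<mu>0)) S"
      using m T0 by (simp add: NM_def)
    fix z
    have mono: "(- (\<delta> * (z \<bullet> e)) / \<sigma>\<^sup>2 - K \<le> - (\<delta> * \<tau>) / \<sigma>\<^sup>2 - K) \<longleftrightarrow> \<tau> \<le> z \<bullet> e"
      using dpos s by (simp add: divide_le_cancel)
    show "z \<in> T \<Longrightarrow> Gd \<sigma> \<nu> z \<le> k * Gd \<sigma> \<mu>0 z"
      unfolding g k_def T_def using mono Gd_nonneg[of \<sigma> \<mu>0 z]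
      by (auto simp: mult.commute intro!: mult_left_mono)
    show "z \<notin> T \<Longrightarrow> k * Gd \<sigma> \<mu>0 z \<le> Gd \<sigma> \<nu> z"
      unfolding g k_def T_def using mono Gd_nonneg[of \<sigma> \<mu>0 z]
      by (auto simp: mult.commute intro!: mult_left_mono)
  qed (auto simp: Gd_nonneg)
  then show ?thesis using T1 by (simp add: NM_def)
qed



abbreviation "SN \<equiv> density lborel std_normal_density"

lemma SN_rd: "real_distribution SN"
proof -
  interpret prob_space SN by (rule prob_std) simp
  show ?thesis by standard auto
qed

lemma Phibar_cdf: "Phibar c = 1 - cdf SN c"
proof -
  interpret real_distribution SN by (rule SN_rd)
  have "Phibar c = prob (UNIV - {..c})"
    unfolding Phibar_def by (intro arg_cong[where f=prob]) auto
  also have "\<dots> = 1 - prob {..c}" by (subst prob_compl[symmetric]) auto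
  finally show ?thesis by (simp add: cdf_def2)
qed

lemma Phibar_antimono: "x \<le> y \<Longrightarrow> Phibar y \<le> Phibar x"
proof -
  interpret real_distribution SN by (rule SN_rd)
  assume "x \<le> y" then show ?thesis
    unfolding Phibar_cdf using cdf_nondecreasing[of x y] by simp
qed

lemma Phibar_surj:
  assumes "0 < \<beta>" "\<beta> < 1"
  shows "\<exists>c. Phibar c = \<beta>"
proof -
  interpret real_distribution SN by (rule SN_rd)
  let ?g = "1 - \<beta>"
  have "eventually (\<lambda>x. cdf SN x < ?g) at_bot"
    using cdf_lim_at_bot assms by (intro order_tendstoD(2)) auto
  then obtain a where a: "cdf SN a < ?g" by (auto simp: eventually_at_bot_linorder)
  have "eventually (\<lambda>x. cdf SN x > ?g) at_top"
    using cdf_lim_at_top_prob assms by (intro order_tendstoD(1)) auto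
  then obtain b0 where b0: "\<And>x. x \<ge> b0 \<Longrightarrow> cdf SN x > ?g" by (auto simp: eventually_at_top_linorder)
  define b where "b = max a b0"
  have b: "cdf SN b > ?g" "a \<le> b" using b0[of b] by (auto simp: b_def)
  have cont: "isCont (cdf SN) x" for x
  proof -
    have "AE z in lborel. z \<in> {x} \<longrightarrow> std_normal_density z = 0"
      using AE_lborel_singleton[of x] by eventually_elim auto
    then have "{x} \<in> null_sets SN"
      by (subst null_sets_density_iff) auto
    then have "emeasure SN {x} = 0" by auto
    then show ?thesis by (subst isCont_cdf) (simp add: measure_def)
  qed
  have "\<exists>x. a \<le> x \<and> x \<le> b \<and> cdf SN x = ?g"
    using a b cont by (intro IVT) auto
  then obtain x where "cdf SN x = 1 - \<beta>" by blast
  then show ?thesis by (intro exI[of _ x]) (simp add: Phibar_cdf)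
qed

lemma NM_null:
  fixes \<mu>0 \<mu> :: "real^'d::finite"
  assumes s: "\<sigma> > 0" and S[measurable]: "S \<in> sets borel" and z: "measure (NM \<sigma> \<mu>0) S = 0"
  shows "measure (NM \<sigma> \<mu>) S = 0"
proof -
  interpret P0: prob_space "NM \<sigma> \<mu>0" by (rule NM_prob[OF s])
  interpret P1: prob_space "NM \<sigma> \<mu>" by (rule NM_prob[OF s])
  have "emeasure (NM \<sigma> \<mu>0) S = 0" using z by (simp add: P0.emeasure_eq_measure)
  then have "(\<integral>\<^sup>+z. ennreal (Gd \<sigma> \<mu>0 z) * indicator S z \<partial>lborel) = 0"
    by (simp add: NM_def emeasure_density)
  then have "AE z in lborel. ennreal (Gd \<sigma> \<mu>0 z) * indicator S z = 0"
    by (subst (asm) nn_integral_0_iff_AE) auto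
  moreover have pos: "\<And>z. ennreal (Gd \<sigma> \<mu>0 z) \<noteq> 0"
    using Gd_pos[OF s] by (simp add: ennreal_eq_0_iff not_le)
  ultimately have "AE z in lborel. z \<notin> S"
    by (auto elim!: eventually_mono simp: indicator_def)
  then have "AE z in lborel. ennreal (Gd \<sigma> \<mu> z) * indicator S z = 0"
    by eventually_elim (simp add: indicator_def)
  then have "(\<integral>\<^sup>+z. ennreal (Gd \<sigma> \<mu> z) * indicator S z \<partial>lborel) = 0"
    by (subst nn_integral_0_iff_AE) auto
  then have "emeasure (NM \<sigma> \<mu>) S = 0" by (simp add: NM_def emeasure_density)
  then show ?thesis by (simp add: P1.emeasure_eq_measure)
qed

lemma sets_NM[simp, measurable_cong]: "sets (NM \<sigma> \<mu>) = sets borel" by (simp add: NM_def)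
lemma space_NM[simp]: "space (NM \<sigma> \<mu>) = UNIV" by (simp add: NM_def)

lemma NM_full:
  fixes \<mu>0 \<mu> :: "real^'d::finite"
  assumes s: "\<sigma> > 0" and S[measurable]: "S \<in> sets borel" and z: "measure (NM \<sigma> \<mu>0) S = 1"
  shows "measure (NM \<sigma> \<mu>) S = 1"
proof -
  interpret P0: prob_space "NM \<sigma> \<mu>0" by (rule NM_prob[OF s])
  interpret P1: prob_space "NM \<sigma> \<mu>" by (rule NM_prob[OF s])
  have c0: "measure (NM \<sigma> \<mu>0) (UNIV - S) = 1 - measure (NM \<sigma> \<mu>0) S"
    using P0.prob_compl[of S] by simp
  have c1: "measure (NM \<sigma> \<mu>) (UNIV - S) = 1 - measure (NM \<sigma> \<mu>) S"
    using P1.prob_compl[of S] by simp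
  have "measure (NM \<sigma> \<mu>) (UNIV - S) = 0"
    by (rule NM_null[OF s, of _ \<mu>0]) (use c0 z in auto)
  then show ?thesis using c1 by simp
qed



lemma l2_step:
  fixes h :: "'a::finite set \<Rightarrow> real^'d::finite"
  assumes "a \<notin> y"
  shows "norm (h (insert a y) - h y) \<le> l2_sens h"
proof -
  have fin: "finite {norm (h y - h y') | y y'. neighbor_pm y y'}"
  proof -
    have "{norm (h y - h y') | y y'. neighbor_pm y y'} \<subseteq> (\<lambda>(y, y'). norm (h y - h y')) ` UNIV"
      by auto
    moreover have "finite ((\<lambda>(y::'a set, y'::'a set). norm (h y - h y')) ` UNIV)" by simp
    ultimately show ?thesis by (rule finite_subset)
  qed
  have "neighbor_pm y (insert a y)" using assms by (auto simp: neighbor_pm_def)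
  then have "norm (h y - h (insert a y)) \<in> {norm (h y - h y') | y y'. neighbor_pm y y'}" by blast
  then have "norm (h y - h (insert a y)) \<le> l2_sens h"
    unfolding l2_sens_def using fin by (rule Max_ge[rotated])
  then show ?thesis by (simp add: norm_minus_commute)
qed

lemma l2_chain:
  fixes h :: "'a::finite set \<Rightarrow> real^'d::finite"
  assumes "u \<inter> v = {}"
  shows "norm (h (u \<union> v) - h u) \<le> real (card v) * l2_sens h"
proof -
  have "finite v" by simp
  then show ?thesis using assms
  proof (induction v rule: finite_induct)
    case empty then show ?case by simp
  next
    case (insert a v)
    have a: "a \<notin> u \<union> v" using insert by auto
    have "norm (h (u \<union> insert a v) - h u) \<le> norm (h (insert a (u \<union> v)) - h (u \<union> v)) + norm (h (u \<union> v) - h u)"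
      using norm_triangle_ineq[of "h (insert a (u \<union> v)) - h (u \<union> v)" "h (u \<union> v) - h u"] by simp
    also have "\<dots> \<le> l2_sens h + real (card v) * l2_sens h"
      using l2_step[OF a, of h] insert by (intro add_mono) auto
    also have "\<dots> = real (card (insert a v)) * l2_sens h" using insert by (simp add: algebra_simps)
    finally show ?case .
  qed
qed

lemma sum_Pow_card:
  fixes f :: "nat \<Rightarrow> real"
  assumes "finite A"
  shows "(\<Sum>v\<in>Pow A. f (card v)) = (\<Sum>i=0..card A. real (card A choose i) * f i)"
proof -
  have "(\<Sum>v\<in>Pow A. f (card v)) = (\<Sum>i\<in>{0..card A}. \<Sum>v\<in>{v\<in>Pow A. card v = i}. f (card v))"
    using assms by (intro sum.group[symmetric]) (auto intro: card_mono)
  also have "\<dots> = (\<Sum>i\<in>{0..card A}. real (card A choose i) * f i)"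
  proof (intro sum.cong refl)
    fix i
    have "(\<Sum>v\<in>{v\<in>Pow A. card v = i}. f (card v)) = (\<Sum>v\<in>{v\<in>Pow A. card v = i}. f i)" by simp
    also have "\<dots> = real (card {v\<in>Pow A. card v = i}) * f i" by simp
    also have "{v\<in>Pow A. card v = i} = {B. B \<subseteq> A \<and> card B = i}" by auto
    finally show "(\<Sum>v\<in>{v\<in>Pow A. card v = i}. f (card v)) = real (card A choose i) * f i"
      using n_subsets[OF assms, of i] by simp
  qed
  finally show ?thesis .
qed

lemma poisson_sum_card:
  fixes f :: "nat \<Rightarrow> real"
  assumes "finite A"
  shows "(\<Sum>v\<in>Pow A. poisson_sub r A v * f (card v)) = (\<Sum>i=0..card A. Binom i (card A) r * f i)"
proof -
  have "(\<Sum>v\<in>Pow A. poisson_sub r A v * f (card v)) = (\<Sum>v\<in>Pow A. r ^ card v * (1 - r) ^ (card A - card v) * f (card v))"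
    by (intro sum.cong refl) (auto simp: poisson_sub_def)
  also have "\<dots> = (\<Sum>i=0..card A. real (card A choose i) * (r ^ i * (1 - r) ^ (card A - i) * f i))"
    by (rule sum_Pow_card[OF assms, of "\<lambda>i. r ^ i * (1 - r) ^ (card A - i) * f i"])
  finally show ?thesis by (simp add: Binom_def mult.assoc)
qed

lemma Binom_sum: "(\<Sum>i=0..n. Binom i n r) = 1"
  using binomial_ring[of r "1 - r" n] by (simp add: Binom_def atLeast0AtMost)

lemma Binom_nonneg: "0 \<le> r \<Longrightarrow> r \<le> 1 \<Longrightarrow> 0 \<le> Binom i n r"
  by (simp add: Binom_def)

lemma poisson_sum_1: "finite A \<Longrightarrow> (\<Sum>v\<in>Pow A. poisson_sub r A v) = 1"
  using poisson_sum_card[of A r "\<lambda>_. 1"] Binom_sum[of "card A" r] by simp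

lemma poisson_nonneg: "0 \<le> r \<Longrightarrow> r \<le> 1 \<Longrightarrow> 0 \<le> poisson_sub r A v"
  by (simp add: poisson_sub_def)

lemma sum_Pow_union:
  assumes "finite c" "finite g" "c \<inter> g = {}"
  shows "(\<Sum>y\<in>Pow (c \<union> g). F y) = (\<Sum>u\<in>Pow c. \<Sum>v\<in>Pow g. F (u \<union> v))"
proof -
  have "(\<Sum>u\<in>Pow c. \<Sum>v\<in>Pow g. F (u \<union> v)) = (\<Sum>p\<in>Pow c \<times> Pow g. F (fst p \<union> snd p))"
    by (subst sum.cartesian_product) (simp add: case_prod_beta)
  also have "\<dots> = (\<Sum>y\<in>Pow (c \<union> g). F y)"
    by (rule sum.reindex_bij_witness[where j = "\<lambda>p. fst p \<union> snd p" and i = "\<lambda>y. (y \<inter> c, y \<inter> g)"])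
       (use assms in auto)
  finally show ?thesis by simp
qed

lemma poisson_union:
  assumes "finite c" "finite g" "c \<inter> g = {}" "u \<subseteq> c" "v \<subseteq> g"
  shows "poisson_sub r (c \<union> g) (u \<union> v) = poisson_sub r c u * poisson_sub r g v"
proof -
  have fu: "finite u" "finite v" using assms by (auto intro: finite_subset)
  have cu: "card (u \<union> v) = card u + card v" using assms fu by (intro card_Un_disjoint) auto
  have cc: "card (c \<union> g) = card c + card g" using assms by (intro card_Un_disjoint) auto
  have le: "card u \<le> card c" "card v \<le> card g" using assms by (auto intro: card_mono)
  have "card c + card g - (card u + card v) = (card c - card u) + (card g - card v)" using le by simp
  then show ?thesis using assms unfolding poisson_sub_def cu cc
    by (auto simp: power_add)
qed



lemma renyi_kernel:
  fixes a b \<alpha> :: real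
  assumes a: "a \<ge> 0" and b: "b > 0" and al: "\<alpha> > 1"
  shows "(\<integral>\<^sup>+ g. ennreal (\<alpha> * (\<alpha> - 1) * g powr (\<alpha> - 2) * max (a - g * b) 0) * indicator {0..} g \<partial>lborel)
         = ennreal (a powr \<alpha> * b powr (1 - \<alpha>))"
proof -
  define L where "L = a / b"
  have L0: "L \<ge> 0" using a b by (simp add: L_def)
  define F where "F = (\<lambda>g::real. \<alpha> * a * g powr (\<alpha> - 1) - (\<alpha> - 1) * b * g powr \<alpha>)"
  define f where "f = (\<lambda>g::real. \<alpha> * (\<alpha> - 1) * g powr (\<alpha> - 2) * (a - g * b))"
  have FTC: "(f has_integral (F L - F 0)) {0..L}"
  proof (rule fundamental_theorem_of_calculus_interior[OF L0])
    show "continuous_on {0..L} F"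
      unfolding F_def using al
      by (intro continuous_intros continuous_on_powr') auto
    fix x assume x: "x \<in> {0<..<L}"
    then have x0: "x > 0" by simp
    have "(F has_real_derivative (\<alpha> * a * ((\<alpha> - 1) * x powr (\<alpha> - 1 - 1)) - (\<alpha> - 1) * b * (\<alpha> * x powr (\<alpha> - 1)))) (at x)"
      unfolding F_def
      by (intro DERIV_diff DERIV_cmult has_real_derivative_powr x0)
    moreover have "\<alpha> * a * ((\<alpha> - 1) * x powr (\<alpha> - 1 - 1)) - (\<alpha> - 1) * b * (\<alpha> * x powr (\<alpha> - 1)) = f x"
    proof -
      have "x powr (\<alpha> - 1) = x powr (\<alpha> - 2) * x"
        using x0 powr_add[of x "\<alpha> - 2" 1] by simp
      then show ?thesis unfolding f_def by (simp add: algebra_simps)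
    qed
    ultimately show "(F has_vector_derivative f x) (at x)"
      by (simp add: has_real_derivative_iff_has_vector_derivative)
  qed
  have fnn: "\<And>x. x \<in> {0..L} \<Longrightarrow> 0 \<le> f x"
  proof -
    fix x assume x: "x \<in> {0..L}"
    then have "x * b \<le> a" using b by (simp add: L_def field_simps)
    then show "0 \<le> f x" unfolding f_def using al by (intro mult_nonneg_nonneg) auto
  qed
  have I: "(\<integral>\<^sup>+ g. ennreal (f g) * indicator {0..L} g \<partial>lborel) = ennreal (F L - F 0)"
    by (rule nn_integral_has_integral_lebesgue'[OF fnn FTC])
  have eq: "ennreal (\<alpha> * (\<alpha> - 1) * g powr (\<alpha> - 2) * max (a - g * b) 0) * indicator {0..} g
      = ennreal (f g) * indicator {0..L} g" for g
  proof (cases "g \<ge> 0")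
    case True
    show ?thesis
    proof (cases "g \<le> L")
      case True
      then have "g * b \<le> a" using b by (simp add: L_def field_simps)
      then show ?thesis using \<open>g \<ge> 0\<close> True by (simp add: f_def indicator_def)
    next
      case False
      then have "a \<le> g * b" using b by (simp add: L_def field_simps)
      then show ?thesis using \<open>g \<ge> 0\<close> False by (simp add: indicator_def)
    qed
  qed (simp add: indicator_def)
  have F0: "F 0 = 0" using al by (simp add: F_def)
  have FL: "F L = a powr \<alpha> * b powr (1 - \<alpha>)"
  proof (cases "a = 0")
    case True then show ?thesis using al by (simp add: F_def L_def)
  next
    case False
    then have a0: "a > 0" using a by simp
    have "L powr \<alpha> = L * L powr (\<alpha> - 1)"
      using a0 b powr_add[of L 1 "\<alpha> - 1"] by (simp add: L_def)
    then have "F L = \<alpha> * a * L powr (\<alpha> - 1) - (\<alpha> - 1) * (b * L) * L powr (\<alpha> - 1)"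
      unfolding F_def by (simp add: algebra_simps)
    also have "b * L = a" using b by (simp add: L_def)
    also have "\<alpha> * a * L powr (\<alpha> - 1) - (\<alpha> - 1) * a * L powr (\<alpha> - 1) = a * L powr (\<alpha> - 1)"
      by (simp add: algebra_simps)
    also have "\<dots> = a * (a powr (\<alpha> - 1) / b powr (\<alpha> - 1))"
      using a0 b by (simp add: L_def powr_divide)
    also have "\<dots> = a powr \<alpha> * b powr (1 - \<alpha>)"
    proof -
      have "a * a powr (\<alpha> - 1) = a powr \<alpha>" using a0 powr_add[of a 1 "\<alpha> - 1"] by simp
      moreover have "b powr (1 - \<alpha>) = 1 / b powr (\<alpha> - 1)"
        using b by (simp add: powr_minus_divide[symmetric])
      ultimately show ?thesis by simp
    qed
    finally show ?thesis .
  qed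
  show ?thesis using I F0 FL by (simp add: eq)
qed

lemma renyi_hockey:
  fixes p q :: "'a::euclidean_space \<Rightarrow> real"
  assumes [measurable]: "p \<in> borel_measurable borel" "q \<in> borel_measurable borel"
    and pnn: "\<And>z. 0 \<le> p z" and qpos: "\<And>z. 0 < q z" and al: "\<alpha> > 1"
  shows "renyi_moment lborel \<alpha> p q =
    (\<integral>\<^sup>+ g. ennreal (\<alpha> * (\<alpha> - 1) * g powr (\<alpha> - 2)) * indicator {0..} g * hockey_stick lborel g p q \<partial>lborel)"
proof -
  have PSax: "pair_sigma_finite (lborel :: 'a measure) (lborel :: real measure)"
    unfolding pair_sigma_finite_def by (simp add: lborel.sigma_finite_measure_axioms)
  define K where "K = (\<lambda>(z::'a, g::real). ennreal (\<alpha> * (\<alpha> - 1) * g powr (\<alpha> - 2) * max (p z - g * q z) 0) * indicator {0..} g)"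
  have Km[measurable]: "K \<in> borel_measurable (lborel \<Otimes>\<^sub>M lborel)"
    unfolding K_def by measurable
  have "renyi_moment lborel \<alpha> p q = (\<integral>\<^sup>+ z. (\<integral>\<^sup>+ g. K (z, g) \<partial>lborel) \<partial>lborel)"
    unfolding renyi_moment_def K_def
    by (intro nn_integral_cong) (simp add: renyi_kernel[OF pnn qpos al])
  also have "\<dots> = (\<integral>\<^sup>+ g. (\<integral>\<^sup>+ z. K (z, g) \<partial>lborel) \<partial>lborel)"
    by (rule pair_sigma_finite.Fubini[OF PSax Km, symmetric])
  also have "\<dots> = (\<integral>\<^sup>+ g. ennreal (\<alpha> * (\<alpha> - 1) * g powr (\<alpha> - 2)) * indicator {0..} g * hockey_stick lborel g p q \<partial>lborel)"
  proof (intro nn_integral_cong)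
    fix g :: real
    have "(\<integral>\<^sup>+ z. K (z, g) \<partial>lborel) = (\<integral>\<^sup>+ z. (ennreal (\<alpha> * (\<alpha> - 1) * g powr (\<alpha> - 2)) * indicator {0..} g) * ennreal (max (p z - g * q z) 0) \<partial>lborel)"
      unfolding K_def using al by (intro nn_integral_cong) (simp add: ennreal_mult' mult_ac)
    also have "\<dots> = ennreal (\<alpha> * (\<alpha> - 1) * g powr (\<alpha> - 2)) * indicator {0..} g * hockey_stick lborel g p q"
      unfolding hockey_stick_def by (rule nn_integral_cmult) measurable
    finally show "(\<integral>\<^sup>+ z. K (z, g) \<partial>lborel) = ennreal (\<alpha> * (\<alpha> - 1) * g powr (\<alpha> - 2)) * indicator {0..} g * hockey_stick lborel g p q" .
  qed
  finally show ?thesis .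
qed



lemma dens_integrable:
  fixes g :: "'a::euclidean_space \<Rightarrow> real"
  assumes [measurable]: "g \<in> borel_measurable borel" and nn: "\<And>z. 0 \<le> g z"
    and P: "prob_space (density lborel g)"
  shows "integrable lborel g"
proof (rule integrableI_nonneg)
  interpret prob_space "density lborel g" by (rule P)
  have "(\<integral>\<^sup>+ x. ennreal (g x) \<partial>lborel) = emeasure (density lborel g) UNIV"
    by (simp add: emeasure_density)
  also have "\<dots> = 1" using emeasure_space_1 by simp
  finally show "(\<integral>\<^sup>+ x. ennreal (g x) \<partial>lborel) < \<infinity>" by simp
qed (auto simp: nn)

lemma dens_set_integral:
  fixes g :: "'a::euclidean_space \<Rightarrow> real"
  assumes [measurable]: "g \<in> borel_measurable borel" "A \<in> sets borel" and nn: "\<And>z. 0 \<le> g z"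
    and P: "prob_space (density lborel g)"
  shows "(\<integral> z. g z * indicator A z \<partial>lborel) = measure (density lborel g) A"
proof -
  interpret prob_space "density lborel g" by (rule P)
  have int: "integrable lborel (\<lambda>z. g z * indicator A z)"
    by (intro integrable_real_mult_indicator dens_integrable[OF _ nn P]) auto
  have "ennreal (\<integral> z. g z * indicator A z \<partial>lborel) = (\<integral>\<^sup>+ z. ennreal (g z * indicator A z) \<partial>lborel)"
    by (rule nn_integral_eq_integral[OF int, symmetric]) (auto simp: nn)
  also have "\<dots> = emeasure (density lborel g) A"
    by (subst emeasure_density) (auto intro!: nn_integral_cong simp: indicator_def)
  also have "\<dots> = ennreal (measure (density lborel g) A)" by (simp add: emeasure_eq_measure)
  finally show ?thesis using nn by (subst (asm) ennreal_inj) (auto intro!: integral_nonneg_AE mult_nonneg_nonneg)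
qed

lemma mix_integrable:
  fixes g :: "'i \<Rightarrow> 'a::euclidean_space \<Rightarrow> real"
  assumes "finite I" and m: "\<And>i. i \<in> I \<Longrightarrow> g i \<in> borel_measurable borel"
    and nn: "\<And>i z. i \<in> I \<Longrightarrow> 0 \<le> g i z"
    and P: "\<And>i. i \<in> I \<Longrightarrow> prob_space (density lborel (g i))"
  shows "integrable lborel (\<lambda>t. \<Sum>i\<in>I. g i t * w i)"
proof (rule Bochner_Integration.integrable_sum)
  fix i assume i: "i \<in> I"
  show "integrable lborel (\<lambda>t. g i t * w i)"
    by (rule integrable_mult_left, rule dens_integrable) (use assms i in auto)
qed

lemma mix_set_integral:
  fixes g :: "'i \<Rightarrow> 'a::euclidean_space \<Rightarrow> real"
  assumes "finite I" and m: "\<And>i. i \<in> I \<Longrightarrow> g i \<in> borel_measurable borel"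
    and nn: "\<And>i z. i \<in> I \<Longrightarrow> 0 \<le> g i z" and A[measurable]: "A \<in> sets borel"
    and P: "\<And>i. i \<in> I \<Longrightarrow> prob_space (density lborel (g i))"
  shows "(\<integral> t. (\<Sum>i\<in>I. g i t * w i) * indicator A t \<partial>lborel) = (\<Sum>i\<in>I. w i * measure (density lborel (g i)) A)"
proof -
  have "(\<integral> t. (\<Sum>i\<in>I. g i t * w i) * indicator A t \<partial>lborel) = (\<integral> t. (\<Sum>i\<in>I. (g i t * indicator A t) * w i) \<partial>lborel)"
    by (intro Bochner_Integration.integral_cong refl) (simp add: sum_distrib_right sum_distrib_left mult_ac)
  also have "\<dots> = (\<Sum>i\<in>I. (\<integral> t. g i t * indicator A t \<partial>lborel) * w i)"
    using assms by (subst Bochner_Integration.integral_sum) (auto intro!: integrable_mult_left integrable_real_mult_indicator dens_integrable)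
  also have "\<dots> = (\<Sum>i\<in>I. w i * measure (density lborel (g i)) A)"
  proof (intro sum.cong refl)
    fix i assume i: "i \<in> I"
    have "(\<integral> t. g i t * indicator A t \<partial>lborel) = measure (density lborel (g i)) A"
      by (rule dens_set_integral) (use assms i in auto)
    then show "(\<integral> t. g i t * indicator A t \<partial>lborel) * w i = w i * measure (density lborel (g i)) A"
      by (metis mult.commute)
  qed
  finally show ?thesis .
qed

lemma hockey_repr:
  fixes p q :: "'a::euclidean_space \<Rightarrow> real"
  assumes [measurable]: "p \<in> borel_measurable borel" "q \<in> borel_measurable borel"
    and ip: "integrable lborel p" and iq: "integrable lborel q"
  shows "hockey_stick lborel \<alpha> p q = ennreal (\<integral> z. max (p z - \<alpha> * q z) 0 \<partial>lborel)"
  unfolding hockey_stick_def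
  by (rule nn_integral_eq_integral) (auto intro!: integrable_max integrable_diff integrable_mult_right ip iq)

lemma hockey_set:
  fixes p q :: "'a::euclidean_space \<Rightarrow> real" and \<alpha> :: real
  assumes [measurable]: "p \<in> borel_measurable borel" "q \<in> borel_measurable borel"
    and ip: "integrable lborel p" and iq: "integrable lborel q"
  defines "S \<equiv> {z. \<alpha> * q z < p z}"
  shows "(\<integral> z. max (p z - \<alpha> * q z) 0 \<partial>lborel) =
     (\<integral> z. p z * indicator S z \<partial>lborel) - \<alpha> * (\<integral> z. q z * indicator S z \<partial>lborel)"
proof -
  have S[measurable]: "S \<in> sets borel" unfolding S_def by measurable
  have "(\<integral> z. max (p z - \<alpha> * q z) 0 \<partial>lborel) = (\<integral> z. p z * indicator S z - \<alpha> * (q z * indicator S z) \<partial>lborel)"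
    by (intro Bochner_Integration.integral_cong refl) (auto simp: S_def indicator_def)
  also have "\<dots> = (\<integral> z. p z * indicator S z \<partial>lborel) - \<alpha> * (\<integral> z. q z * indicator S z \<partial>lborel)"
  proof -
    have i1: "integrable lborel (\<lambda>z. p z * indicator S z)" by (intro integrable_real_mult_indicator ip) auto
    have i2: "integrable lborel (\<lambda>z. \<alpha> * (q z * indicator S z))" by (intro integrable_mult_right integrable_real_mult_indicator iq) auto
    show ?thesis using Bochner_Integration.integral_diff[OF i1 i2] by simp
  qed
  finally show ?thesis .
qed

lemma hockey_lower:
  fixes p q :: "'a::euclidean_space \<Rightarrow> real"
  assumes [measurable]: "p \<in> borel_measurable borel" "q \<in> borel_measurable borel" "A \<in> sets borel"
    and ip: "integrable lborel p" and iq: "integrable lborel q"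
  shows "(\<integral> z. p z * indicator A z \<partial>lborel) - \<alpha> * (\<integral> z. q z * indicator A z \<partial>lborel)
      \<le> (\<integral> z. max (p z - \<alpha> * q z) 0 \<partial>lborel)"
proof -
  have i1: "integrable lborel (\<lambda>z. p z * indicator A z)" by (intro integrable_real_mult_indicator ip) auto
  have i2: "integrable lborel (\<lambda>z. \<alpha> * (q z * indicator A z))" by (intro integrable_mult_right integrable_real_mult_indicator iq) auto
  have i3: "integrable lborel (\<lambda>z. p z * indicator A z - \<alpha> * (q z * indicator A z))"
    using i1 i2 by (rule Bochner_Integration.integrable_diff)
  have i5: "integrable lborel (\<lambda>z. p z - \<alpha> * q z)"
    using ip integrable_mult_right[OF iq, of \<alpha>] by (rule Bochner_Integration.integrable_diff)
  have i4: "integrable lborel (\<lambda>z. max (p z - \<alpha> * q z) 0)"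
    using i5 integrable_zero by (rule integrable_max)
  have "(\<integral> z. p z * indicator A z \<partial>lborel) - \<alpha> * (\<integral> z. q z * indicator A z \<partial>lborel)
      = (\<integral> z. p z * indicator A z - \<alpha> * (q z * indicator A z) \<partial>lborel)"
    using Bochner_Integration.integral_diff[OF i1 i2] by simp
  also have "\<dots> \<le> (\<integral> z. max (p z - \<alpha> * q z) 0 \<partial>lborel)"
    by (rule integral_mono[OF i3 i4]) (auto simp: indicator_def)
  finally show ?thesis .
qed



lemma gmd: "gauss_mech_density \<sigma> h y = Gd \<sigma> (h y)"
  by (simp add: fun_eq_iff gauss_mech_density_def Gd_def)

lemma pos_mix:
  fixes g :: "'i \<Rightarrow> real"
  assumes "finite I" "\<And>i. i \<in> I \<Longrightarrow> 0 \<le> w i" "(\<Sum>i\<in>I. w i) = 1" "\<And>i. i \<in> I \<Longrightarrow> g i > 0"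
  shows "(\<Sum>i\<in>I. g i * w i) > 0"
proof -
  have "\<exists>i\<in>I. w i > 0"
  proof (rule ccontr)
    assume "\<not> (\<exists>i\<in>I. w i > 0)"
    then have "\<And>i. i \<in> I \<Longrightarrow> w i = 0" using assms(2) by force
    then have "(\<Sum>i\<in>I. w i) = 0" by simp
    then show False using assms(3) by simp
  qed
  then obtain i where i: "i \<in> I" "w i > 0" by blast
  have "0 < g i * w i" using i assms(4) by simp
  also have "\<dots> \<le> (\<Sum>i\<in>I. g i * w i)"
    using i assms by (intro member_le_sum) (auto intro: mult_nonneg_nonneg less_imp_le)
  finally show ?thesis .
qed

lemma Pst_eq:
  assumes s1: "s1 > 0" and "0 \<le> r" "r \<le> 1"
  shows "(\<integral> t. (\<Sum>i=1..K+1. normal_density (real (i - 1)) s1 t * Binom (i - 1) K r) * indicator {c0 * s1<..} t \<partial>lborel)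
     = (\<Sum>i=0..K. Binom i K r * Phibar (c0 - real i / s1))"
proof -
  have "(\<integral> t. (\<Sum>i=1..K+1. normal_density (real (i - 1)) s1 t * Binom (i - 1) K r) * indicator {c0 * s1<..} t \<partial>lborel)
    = (\<Sum>i=1..K+1. Binom (i - 1) K r * measure (density lborel (normal_density (real (i - 1)) s1)) {c0 * s1<..})"
    by (rule mix_set_integral) (auto intro: prob_std s1)
  also have "\<dots> = (\<Sum>i=1..K+1. Binom (i - 1) K r * Phibar (c0 - real (i - 1) / s1))"
    using s1 by (intro sum.cong refl) (simp add: measure_normal_Ioi diff_divide_distrib)
  also have "\<dots> = (\<Sum>i=0..K. Binom i K r * Phibar (c0 - real i / s1))"
    using sum.shift_bounds_cl_Suc_ivl[of "\<lambda>i. Binom (i - 1) K r * Phibar (c0 - real (i - 1) / s1)" 0 K] by simp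
  finally show ?thesis .
qed

lemma Qst_eq:
  assumes s1: "s1 > 0" and "0 \<le> r" "r \<le> 1"
  shows "(\<integral> t. (\<Sum>i=1..K+1. normal_density (- real (i - 1)) s1 t * Binom (i - 1) K r) * indicator {c0 * s1<..} t \<partial>lborel)
     = (\<Sum>i=0..K. Binom i K r * Phibar (c0 + real i / s1))"
proof -
  have "(\<integral> t. (\<Sum>i=1..K+1. normal_density (- real (i - 1)) s1 t * Binom (i - 1) K r) * indicator {c0 * s1<..} t \<partial>lborel)
    = (\<Sum>i=1..K+1. Binom (i - 1) K r * measure (density lborel (normal_density (- real (i - 1)) s1)) {c0 * s1<..})"
    by (rule mix_set_integral) (auto intro: prob_std s1)
  also have "\<dots> = (\<Sum>i=1..K+1. Binom (i - 1) K r * Phibar (c0 + real (i - 1) / s1))"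
  proof (intro sum.cong refl)
    fix i
    have "(c0 * s1 - - real (i - 1)) / s1 = c0 + real (i - 1) / s1" using s1 by (simp add: field_simps)
    then show "Binom (i - 1) K r * measure (density lborel (normal_density (- real (i - 1)) s1)) {c0 * s1<..}
      = Binom (i - 1) K r * Phibar (c0 + real (i - 1) / s1)"
      using measure_normal_Ioi[OF s1, of "- real (i - 1)" "c0 * s1"] by simp
  qed
  also have "\<dots> = (\<Sum>i=0..K. Binom i K r * Phibar (c0 + real i / s1))"
    using sum.shift_bounds_cl_Suc_ivl[of "\<lambda>i. Binom (i - 1) K r * Phibar (c0 + real (i - 1) / s1)" 0 K] by simp
  finally show ?thesis .
qed

lemma mix_total:
  assumes s1: "s1 > 0"
  shows "(\<integral> t. (\<Sum>i=1..K+1. normal_density (m i) s1 t * Binom (i - 1) K r) * indicator UNIV t \<partial>lborel) = 1"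
proof -
  have "(\<integral> t. (\<Sum>i=1..K+1. normal_density (m i) s1 t * Binom (i - 1) K r) * indicator UNIV t \<partial>lborel)
    = (\<Sum>i=1..K+1. Binom (i - 1) K r * measure (density lborel (normal_density (m i) s1)) UNIV)"
    by (rule mix_set_integral) (auto intro: prob_std s1)
  also have "\<dots> = (\<Sum>i=1..K+1. Binom (i - 1) K r)"
  proof (intro sum.cong refl)
    fix i
    interpret prob_space "density lborel (normal_density (m i) s1)" by (rule prob_std[OF s1])
    show "Binom (i - 1) K r * measure (density lborel (normal_density (m i) s1)) UNIV = Binom (i - 1) K r"
      using prob_space by simp
  qed
  also have "\<dots> = (\<Sum>i=0..K. Binom i K r)"
    using sum.shift_bounds_cl_Suc_ivl[of "\<lambda>i. Binom (i - 1) K r" 0 K] by simp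
  also have "\<dots> = 1" by (rule Binom_sum)
  finally show ?thesis .
qed



lemma main_hockey:
  fixes h :: "'a::finite set \<Rightarrow> real^'d::finite" and c gm gp :: "'a set"
  assumes r0: "0 \<le> r" and r1: "r \<le> 1" and s: "\<sigma> > 0" and L: "l2_sens h > 0" and al: "\<alpha> \<ge> 0"
    and d1: "c \<inter> gm = {}" and d2: "c \<inter> gp = {}"
  shows "hockey_stick lborel \<alpha> (subsampled_density r \<sigma> h (c \<union> gm)) (subsampled_density r \<sigma> h (c \<union> gp))
     \<le> hockey_stick lborel \<alpha> (\<lambda>t. \<Sum>i=1..card gm+1. normal_density (real (i - 1)) (\<sigma> / l2_sens h) t * Binom (i - 1) (card gm) r)
                          (\<lambda>t. \<Sum>j=1..card gp+1. normal_density (- real (j - 1)) (\<sigma> / l2_sens h) t * Binom (j - 1) (card gp) r)"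
proof -
  define s1 where "s1 = \<sigma> / l2_sens h"
  have s1: "s1 > 0" using s L by (simp add: s1_def)
  define Km where "Km = card gm"
  define Kp where "Kp = card gp"
  define P where "P = (\<lambda>t. \<Sum>i=1..Km+1. normal_density (real (i - 1)) s1 t * Binom (i - 1) Km r)"
  define Q where "Q = (\<lambda>t. \<Sum>j=1..Kp+1. normal_density (- real (j - 1)) s1 t * Binom (j - 1) Kp r)"
  have Pm[measurable]: "P \<in> borel_measurable borel" unfolding P_def by measurable
  have Qm[measurable]: "Q \<in> borel_measurable borel" unfolding Q_def by measurable
  have iP: "integrable lborel P" unfolding P_def by (rule mix_integrable) (auto intro: prob_std s1)
  have iQ: "integrable lborel Q" unfolding Q_def by (rule mix_integrable) (auto intro: prob_std s1)
  define Hr where "Hr = (\<integral> t. max (P t - \<alpha> * Q t) 0 \<partial>lborel)"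
  have HPQ: "hockey_stick lborel \<alpha> P Q = ennreal Hr" unfolding Hr_def by (rule hockey_repr[OF Pm Qm iP iQ])
  define Pst where "Pst = (\<lambda>c0. \<Sum>i=0..Km. Binom i Km r * Phibar (c0 - real i / s1))"
  define Qst where "Qst = (\<lambda>c0. \<Sum>i=0..Kp. Binom i Kp r * Phibar (c0 + real i / s1))"
  have H1: "Pst c0 - \<alpha> * Qst c0 \<le> Hr" for c0
    using hockey_lower[OF Pm Qm _ iP iQ, of "{c0 * s1<..}" \<alpha>] Pst_eq[OF s1 r0 r1, of Km c0] Qst_eq[OF s1 r0 r1, of Kp c0]
    by (simp add: Hr_def Pst_def Qst_def P_def Q_def)
  have H2: "1 - \<alpha> \<le> Hr"
    using hockey_lower[OF Pm Qm _ iP iQ, of UNIV \<alpha>] mix_total[OF s1, where K=Km and m="\<lambda>i. real (i-1)" and r=r]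
      mix_total[OF s1, where K=Kp and m="\<lambda>i. - real (i-1)" and r=r]
    by (simp add: Hr_def P_def Q_def)
  have H0: "0 \<le> Hr" unfolding Hr_def by (rule integral_nonneg_AE) auto

  define x where "x = c \<union> gm"
  define x' where "x' = c \<union> gp"
  define p where "p = subsampled_density r \<sigma> h x"
  define q where "q = subsampled_density r \<sigma> h x'"
  have p_eq: "p = (\<lambda>z. \<Sum>y\<in>Pow x. Gd \<sigma> (h y) z * poisson_sub r x y)"
    by (simp add: p_def subsampled_density_def gmd fun_eq_iff)
  have q_eq: "q = (\<lambda>z. \<Sum>y\<in>Pow x'. Gd \<sigma> (h y) z * poisson_sub r x' y)"
    by (simp add: q_def subsampled_density_def gmd fun_eq_iff)
  have NMp: "\<And>y. prob_space (density lborel (Gd \<sigma> (h y)))" using NM_prob[OF s] by (simp add: NM_def)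
  have pm[measurable]: "p \<in> borel_measurable borel" unfolding p_eq by measurable
  have qm[measurable]: "q \<in> borel_measurable borel" unfolding q_eq by measurable
  have ip: "integrable lborel p" unfolding p_eq by (rule mix_integrable) (auto intro: NMp Gd_nonneg)
  have iq: "integrable lborel q" unfolding q_eq by (rule mix_integrable) (auto intro: NMp Gd_nonneg)
  define S where "S = {z. \<alpha> * q z < p z}"
  have S[measurable]: "S \<in> sets borel" unfolding S_def by measurable
  have Hpq: "hockey_stick lborel \<alpha> p q = ennreal ((\<integral> z. p z * indicator S z \<partial>lborel) - \<alpha> * (\<integral> z. q z * indicator S z \<partial>lborel))"
    using hockey_repr[OF pm qm ip iq, of \<alpha>] hockey_set[OF pm qm ip iq, of \<alpha>] by (simp add: S_def)
  define m where "m = (\<lambda>y. measure (NM \<sigma> (h y)) S)"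
  have m01: "0 \<le> m y" "m y \<le> 1" for y
  proof -
    interpret prob_space "NM \<sigma> (h y)" by (rule NM_prob[OF s])
    show "0 \<le> m y" "m y \<le> 1" by (auto simp: m_def)
  qed
  have intp: "(\<integral> z. p z * indicator S z \<partial>lborel) = (\<Sum>y\<in>Pow x. poisson_sub r x y * m y)"
    unfolding p_eq m_def NM_def by (rule mix_set_integral) (auto intro: NMp Gd_nonneg)
  have intq: "(\<integral> z. q z * indicator S z \<partial>lborel) = (\<Sum>y\<in>Pow x'. poisson_sub r x' y * m y)"
    unfolding q_eq m_def NM_def by (rule mix_set_integral) (auto intro: NMp Gd_nonneg)
  have decomp: "(\<Sum>y\<in>Pow (c \<union> g). poisson_sub r (c \<union> g) y * m y)
      = (\<Sum>u\<in>Pow c. poisson_sub r c u * (\<Sum>v\<in>Pow g. poisson_sub r g v * m (u \<union> v)))"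
    if dg: "c \<inter> g = {}" for g
  proof -
    have "(\<Sum>y\<in>Pow (c \<union> g). poisson_sub r (c \<union> g) y * m y)
        = (\<Sum>u\<in>Pow c. \<Sum>v\<in>Pow g. poisson_sub r (c \<union> g) (u \<union> v) * m (u \<union> v))"
      using dg by (intro sum_Pow_union) auto
    also have "\<dots> = (\<Sum>u\<in>Pow c. poisson_sub r c u * (\<Sum>v\<in>Pow g. poisson_sub r g v * m (u \<union> v)))"
      using dg by (auto intro!: sum.cong simp: poisson_union sum_distrib_left mult_ac)
    finally show ?thesis .
  qed
  define A where "A = (\<lambda>u. \<Sum>v\<in>Pow gm. poisson_sub r gm v * m (u \<union> v))"
  define B where "B = (\<lambda>u. \<Sum>v\<in>Pow gp. poisson_sub r gp v * m (u \<union> v))"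
  have key: "A u - \<alpha> * B u \<le> Hr" if u: "u \<subseteq> c" for u
  proof -
    have Bnn: "0 \<le> B u" unfolding B_def
      by (intro sum_nonneg mult_nonneg_nonneg poisson_nonneg r0 r1 m01)
    consider "m u = 0" | "m u = 1" | "0 < m u \<and> m u < 1" using m01[of u] by fastforce
    then show ?thesis
    proof cases
      case 1
      have "m (u \<union> v) = 0" for v using NM_null[OF s S, of "h u" "h (u \<union> v)"] 1 by (simp add: m_def)
      then have "A u = 0" by (simp add: A_def)
      then show ?thesis using Bnn al H0 by (simp add: mult_nonneg_nonneg) (smt (verit) mult_nonneg_nonneg)
    next
      case 2
      have "m (u \<union> v) = 1" for v using NM_full[OF s S, of "h u" "h (u \<union> v)"] 2 by (simp add: m_def)
      then have "A u = 1" "B u = 1" by (simp_all add: A_def B_def poisson_sum_1)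
      then show ?thesis using H2 by simp
    next
      case 3
      then obtain c0 where c0: "Phibar c0 = m u" using Phibar_surj by blast
      have A_le: "A u \<le> Pst c0"
      proof -
        have "A u \<le> (\<Sum>v\<in>Pow gm. poisson_sub r gm v * Phibar (c0 - real (card v) / s1))"
          unfolding A_def
        proof (intro sum_mono mult_left_mono poisson_nonneg r0 r1)
          fix v assume v: "v \<in> Pow gm"
          have uv: "u \<inter> v = {}" using u v d1 by auto
          have "m (u \<union> v) \<le> Phibar (c0 - norm (h (u \<union> v) - h u) / \<sigma>)"
            unfolding m_def by (rule NP_up[OF s S]) (use c0 in \<open>simp add: m_def\<close>)
          also have "\<dots> \<le> Phibar (c0 - real (card v) / s1)"
          proof (rule Phibar_antimono)
            have "norm (h (u \<union> v) - h u) / \<sigma> \<le> real (card v) * l2_sens h / \<sigma>"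
              using l2_chain[OF uv, of h] s by (simp add: divide_right_mono)
            then show "c0 - real (card v) / s1 \<le> c0 - norm (h (u \<union> v) - h u) / \<sigma>"
              by (simp add: s1_def)
          qed
          finally show "m (u \<union> v) \<le> Phibar (c0 - real (card v) / s1)" .
        qed
        also have "\<dots> = Pst c0"
          using poisson_sum_card[of gm r "\<lambda>i. Phibar (c0 - real i / s1)"] by (simp add: Pst_def Km_def)
        finally show ?thesis .
      qed
      have B_ge: "Qst c0 \<le> B u"
      proof -
        have "Qst c0 = (\<Sum>v\<in>Pow gp. poisson_sub r gp v * Phibar (c0 + real (card v) / s1))"
          using poisson_sum_card[of gp r "\<lambda>i. Phibar (c0 + real i / s1)"] by (simp add: Qst_def Kp_def)
        also have "\<dots> \<le> B u"
          unfolding B_def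
        proof (intro sum_mono mult_left_mono poisson_nonneg r0 r1)
          fix v assume v: "v \<in> Pow gp"
          have uv: "u \<inter> v = {}" using u v d2 by auto
          have "Phibar (c0 + real (card v) / s1) \<le> Phibar (c0 + norm (h (u \<union> v) - h u) / \<sigma>)"
          proof (rule Phibar_antimono)
            have "norm (h (u \<union> v) - h u) / \<sigma> \<le> real (card v) * l2_sens h / \<sigma>"
              using l2_chain[OF uv, of h] s by (simp add: divide_right_mono)
            then show "c0 + norm (h (u \<union> v) - h u) / \<sigma> \<le> c0 + real (card v) / s1"
              by (simp add: s1_def)
          qed
          also have "\<dots> \<le> m (u \<union> v)"
            unfolding m_def by (rule NP_low[OF s S]) (use c0 in \<open>simp add: m_def\<close>)
          finally show "Phibar (c0 + real (card v) / s1) \<le> m (u \<union> v)" .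
        qed
        finally show ?thesis .
      qed
      have "\<alpha> * Qst c0 \<le> \<alpha> * B u" using B_ge al by (rule mult_left_mono)
      then show ?thesis using A_le H1[of c0] by linarith
    qed
  qed
  have "(\<integral> z. p z * indicator S z \<partial>lborel) - \<alpha> * (\<integral> z. q z * indicator S z \<partial>lborel)
      = (\<Sum>u\<in>Pow c. poisson_sub r c u * (A u - \<alpha> * B u))"
    unfolding intp intq x_def x'_def decomp[OF d1] decomp[OF d2] A_def B_def
    by (simp add: sum_distrib_left sum_subtractf algebra_simps)
  also have "\<dots> \<le> (\<Sum>u\<in>Pow c. poisson_sub r c u * Hr)"
    by (intro sum_mono mult_left_mono poisson_nonneg r0 r1 key) auto
  also have "\<dots> = Hr" using poisson_sum_1[of c r] by (simp flip: sum_distrib_right)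
  finally have "hockey_stick lborel \<alpha> p q \<le> hockey_stick lborel \<alpha> P Q"
    unfolding Hpq HPQ by (rule ennreal_leI)
  then show ?thesis by (simp add: p_def q_def x_def x'_def P_def Q_def s1_def Km_def Kp_def)
qed



lemma sub_eq: "subsampled_density r \<sigma> h x = (\<lambda>z. \<Sum>y\<in>Pow x. Gd \<sigma> (h y) z * poisson_sub r x y)"
  by (simp add: subsampled_density_def gmd fun_eq_iff)

lemma sub_meas[measurable]:
  fixes h :: "'a::finite set \<Rightarrow> real^'d::finite"
  shows "subsampled_density r \<sigma> h x \<in> borel_measurable borel"
  unfolding sub_eq by measurable

lemma sub_nonneg: "0 \<le> r \<Longrightarrow> r \<le> 1 \<Longrightarrow> 0 \<le> subsampled_density r \<sigma> h x z"
  unfolding sub_eq by (auto intro!: sum_nonneg mult_nonneg_nonneg Gd_nonneg poisson_nonneg)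

lemma sub_pos:
  fixes h :: "'a::finite set \<Rightarrow> real^'d::finite"
  shows "0 \<le> r \<Longrightarrow> r \<le> 1 \<Longrightarrow> \<sigma> > 0 \<Longrightarrow> 0 < subsampled_density r \<sigma> h x z"
  unfolding sub_eq by (rule pos_mix) (auto intro: poisson_nonneg poisson_sum_1 Gd_pos)

lemma mixQ_pos:
  assumes "0 \<le> r" "r \<le> 1" "s1 > 0"
  shows "0 < (\<Sum>j=1..K+1. normal_density (m j) s1 t * Binom (j - 1) K r)"
proof (rule pos_mix)
  show "(\<Sum>j=1..K+1. Binom (j - 1) K r) = 1"
    using sum.shift_bounds_cl_Suc_ivl[of "\<lambda>i. Binom (i - 1) K r" 0 K] Binom_sum[of K r] by simp
qed (use assms in \<open>auto intro: Binom_nonneg normal_density_pos\<close>)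

lemma mixP_nonneg:
  assumes "0 \<le> r" "r \<le> 1"
  shows "0 \<le> (\<Sum>j=1..K+1. normal_density (m j) s1 t * Binom (j - 1) K r)"
  by (intro sum_nonneg mult_nonneg_nonneg normal_density_nonneg Binom_nonneg assms)

theorem theorem3p8:
  fixes h :: "'a::finite set \<Rightarrow> real ^ 'd"
    and r \<sigma> \<alpha> :: real and Kp Km :: nat and x x' :: "'a set"
  assumes "0 \<le> r" "r \<le> 1" "\<sigma> > 0" "l2_sens h > 0"
    and "group_neighbor Kp Km x x'"
  shows "let p = subsampled_density r \<sigma> h x;
             q = subsampled_density r \<sigma> h x';
             P = (\<lambda>t::real. \<Sum>i=1..Km+1. normal_density (real (i - 1)) (\<sigma> / l2_sens h) t * Binom (i - 1) Km r);
             Q = (\<lambda>t::real. \<Sum>j=1..Kp+1. normal_density (- real (j - 1)) (\<sigma> / l2_sens h) t * Binom (j - 1) Kp r)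
         in (\<alpha> \<ge> 0 \<longrightarrow> hockey_stick lborel \<alpha> p q \<le> hockey_stick lborel \<alpha> P Q)
          \<and> (\<alpha> > 1 \<longrightarrow> renyi_moment lborel \<alpha> p q \<le> renyi_moment lborel \<alpha> P Q)"
proof -
  note r0 = assms(1) and r1 = assms(2) and s = assms(3) and L = assms(4)
  obtain gm gp where g: "gm \<subseteq> x" "card gm = Km" "gp \<inter> x = {}" "card gp = Kp" "x' = (x - gm) \<union> gp"
    using assms(5) unfolding group_neighbor_def by blast
  define c where "c = x - gm"
  have xc: "x = c \<union> gm" using g by (auto simp: c_def)
  have xc': "x' = c \<union> gp" using g by (simp add: c_def)
  have d1: "c \<inter> gm = {}" by (auto simp: c_def)
  have d2: "c \<inter> gp = {}" using g by (auto simp: c_def)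
  define p where "p = subsampled_density r \<sigma> h x"
  define q where "q = subsampled_density r \<sigma> h x'"
  define P where "P = (\<lambda>t::real. \<Sum>i=1..Km+1. normal_density (real (i - 1)) (\<sigma> / l2_sens h) t * Binom (i - 1) Km r)"
  define Q where "Q = (\<lambda>t::real. \<Sum>j=1..Kp+1. normal_density (- real (j - 1)) (\<sigma> / l2_sens h) t * Binom (j - 1) Kp r)"
  have HK: "hockey_stick lborel g p q \<le> hockey_stick lborel g P Q" if "g \<ge> 0" for g
    using main_hockey[OF r0 r1 s L that d1 d2] unfolding p_def q_def P_def Q_def xc xc' g(2) g(4)
    by simp
  have s1: "\<sigma> / l2_sens h > 0" using s L by simp
  have R: "renyi_moment lborel \<alpha> p q \<le> renyi_moment lborel \<alpha> P Q" if al: "\<alpha> > 1"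
  proof -
    have pm[measurable]: "p \<in> borel_measurable borel" "q \<in> borel_measurable borel"
      by (simp_all add: p_def q_def)
    have Pm[measurable]: "P \<in> borel_measurable borel" "Q \<in> borel_measurable borel"
      unfolding P_def Q_def by measurable
    have Pnn: "\<And>t. 0 \<le> P t" unfolding P_def by (rule mixP_nonneg[OF r0 r1])
    have Qpos: "\<And>t. 0 < Q t" unfolding Q_def by (rule mixQ_pos[OF r0 r1 s1])
    have "renyi_moment lborel \<alpha> p q =
      (\<integral>\<^sup>+ g. ennreal (\<alpha> * (\<alpha> - 1) * g powr (\<alpha> - 2)) * indicator {0..} g * hockey_stick lborel g p q \<partial>lborel)"
      by (rule renyi_hockey[OF pm]) (auto simp: p_def q_def intro: sub_nonneg sub_pos r0 r1 s al)
    also have "\<dots> \<le> (\<integral>\<^sup>+ g. ennreal (\<alpha> * (\<alpha> - 1) * g powr (\<alpha> - 2)) * indicator {0..} g * hockey_stick lborel g P Q \<partial>lborel)"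
    proof (intro nn_integral_mono)
      fix g :: real
      show "ennreal (\<alpha> * (\<alpha> - 1) * g powr (\<alpha> - 2)) * indicator {0..} g * hockey_stick lborel g p q
         \<le> ennreal (\<alpha> * (\<alpha> - 1) * g powr (\<alpha> - 2)) * indicator {0..} g * hockey_stick lborel g P Q"
        by (cases "g \<ge> 0") (auto intro!: mult_left_mono HK simp: indicator_def)
    qed
    also have "\<dots> = renyi_moment lborel \<alpha> P Q"
      by (rule renyi_hockey[OF Pm Pnn Qpos al, symmetric])
    finally show ?thesis .
  qed
  show ?thesis unfolding Let_def p_def[symmetric] q_def[symmetric] P_def[symmetric] Q_def[symmetric]
    using HK R by simp
qed


end
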